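(* Let $f$ be a frog model statistic with values in $[0,\infty]$. Suppose that for some nonroot vertex $v$ and all frog models $(\eta,S)$, $$f(\eta,S)=\sum_{i=1}^{\eta(v)}f\bigl(\sigma_{S_\cdot(v,i)}(\kappa_v(\eta,S))\bigr).$$ Then for all $(\eta,S)$ and all paths $P^1_\cdot,\dots,P^m_\cdot$ starting at $v$: (i) for every $m\geq1$, $(-1)^m\Delta_{P^1_\cdot}\cdots\Delta_{P^m_\cdot}f(\eta,S)\le0$ whenever all values $f(\sigma_{P^{u_1}_\cdot}\cdots\sigma_{P^{u_j}_\cdot}(\eta,S))$, $\{u_1,\dots,u_j\}\subseteq\{1,\dots,m\}$, are finite; (ii) if $f(\eta,S)=\infty$ then $f(\sigma_{P^1_\cdot}(\eta,S))=\infty$; (iii) if $f(\sigma_{P^1_\cdot}\sigma_{P^2_\cdot}(\eta,S))=\infty$ then $f(\sigma_{P^i_\cdot}(\eta,S))=\infty$ for $i=1$ or $i=2$.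
   Context: Frog model: $G$ countable with root $\emptyset$; $(\eta,S)$ consists of counts $\eta(v)\in\{0,1,\dots\}$ for $v\ne\emptyset$ and paths $S_\cdot(v,i)$ with $S_0(v,i)=v$; one active frog starts at $\emptyset$; sleeping frogs activate when an active frog visits their vertex, then follow their paths. $\kappa_v(\eta,S)$: delete all frogs at $v$. $\sigma_{P_\cdot}(\eta,S)$: add one extra frog with path $P_\cdot$ at $P_0$. $\Delta_{P_\cdot}f(\eta,S)=f(\sigma_{P_\cdot}(\eta,S))-f(\eta,S)$. *)

theory Defs
  imports "HOL-Analysis.Analysis" "HOL-Library.Sublist"
begin

type_synonym 'v path = "nat \<Rightarrow> 'v"
type_synonym 'v frogs = "('v \<Rightarrow> nat) \<times> ('v \<Rightarrow> nat \<Rightarrow> 'v path)"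

definition is_path :: "('v \<Rightarrow> 'v \<Rightarrow> bool) \<Rightarrow> 'v path \<Rightarrow> bool" where
  "is_path E P \<longleftrightarrow> (\<forall>n. E (P n) (P (Suc n)))"

text \<open>Convention: eta r = 1 and S r 1 is the path of the
  initially active frog at the root r; for other v, frogs are indexed 1..eta v.
  Unused slots are set to the constant path, so a frog model is determined by its
  actual frogs.\<close>
definition valid_fm :: "('v \<Rightarrow> 'v \<Rightarrow> bool) \<Rightarrow> 'v \<Rightarrow> 'v frogs \<Rightarrow> bool" where
  "valid_fm E r x \<longleftrightarrow>
     fst x r = 1 \<and>
     (\<forall>u i. 1 \<le> i \<and> i \<le> fst x u \<longrightarrow> snd x u i 0 = u \<and> is_path E (snd x u i)) \<and>
     (\<forall>u i. (i = 0 \<or> fst x u < i) \<longrightarrow> snd x u i = (\<lambda>_. u))"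

definition kappa :: "'v \<Rightarrow> 'v frogs \<Rightarrow> 'v frogs" where
  "kappa v x = ((fst x)(v := 0), (snd x)(v := (\<lambda>i _. v)))"

definition sigma :: "'v path \<Rightarrow> 'v frogs \<Rightarrow> 'v frogs" where
  "sigma P x = (let u = P 0; n = fst x u in
     ((fst x)(u := Suc n), (snd x)(u := (snd x u)(Suc n := P))))"

fun Delta :: "'v path list \<Rightarrow> ('v frogs \<Rightarrow> real) \<Rightarrow> 'v frogs \<Rightarrow> real" where
  "Delta [] g x = g x"
| "Delta (P # Ps) g x = Delta Ps g (sigma P x) - Delta Ps g x"

text \<open>sigma_seq [Q1,...,Qj] x applies sigma_Q1 first, then Q2, ... (the order in
  which the points appear in the expansion of Delta).\<close>
definition sigma_seq :: "'v path list \<Rightarrow> 'v frogs \<Rightarrow> 'v frogs" where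
  "sigma_seq Qs x = foldl (\<lambda>y Q. sigma Q y) x Qs"

end

theory Submission
  imports Defs
begin

lemma kappa_sigma: "P 0 = v \<Longrightarrow> kappa v (sigma P x) = kappa v x"
  by (auto simp: kappa_def sigma_def Let_def)

lemma valid_sigma:
  assumes "valid_fm E r x" "P 0 = v" "is_path E P" "v \<noteq> r"
  shows "valid_fm E r (sigma P x)"
  using assms unfolding valid_fm_def sigma_def Let_def
  by (auto simp: le_Suc_eq)

lemma add_frog:
  assumes rec: "\<forall>x. valid_fm E r x \<longrightarrow>
                 f x = (\<Sum>i = 1..fst x v. f (sigma (snd x v i) (kappa v x)))"
    and vx: "valid_fm E r x" and P: "P 0 = v" "is_path E P" and vr: "v \<noteq> r"
  shows "f (sigma P x) = f x + f (sigma P (kappa v x))"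
proof -
  let ?n = "fst x v"
  have v': "valid_fm E r (sigma P x)" using valid_sigma[OF vx P vr] .
  have fs: "fst (sigma P x) v = Suc ?n" using P by (simp add: sigma_def Let_def)
  have "f (sigma P x) = (\<Sum>i = 1..Suc ?n. f (sigma (snd (sigma P x) v i) (kappa v x)))"
  proof -
    have "f (sigma P x) = (\<Sum>i = 1..fst (sigma P x) v. f (sigma (snd (sigma P x) v i) (kappa v (sigma P x))))"
      using rec v' by blast
    thus ?thesis unfolding fs kappa_sigma[of P v x, OF P(1)] .
  qed
  also have "\<dots> = (\<Sum>i = 1..?n. f (sigma (snd (sigma P x) v i) (kappa v x)))
       + f (sigma (snd (sigma P x) v (Suc ?n)) (kappa v x))"
    by (simp add: sum.cl_ivl_Suc)
  also have "(\<Sum>i = 1..?n. f (sigma (snd (sigma P x) v i) (kappa v x)))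
      = (\<Sum>i = 1..?n. f (sigma (snd x v i) (kappa v x)))"
    by (rule sum.cong) (auto simp: sigma_def Let_def P)
  also have "\<dots> = f x" using rec vx by metis
  also have "snd (sigma P x) v (Suc ?n) = P" using P by (simp add: sigma_def Let_def)
  finally show ?thesis .
qed

lemma delta_claim:
  assumes rec: "\<forall>x. valid_fm E r x \<longrightarrow>
                 f x = (\<Sum>i = 1..fst x v. f (sigma (snd x v i) (kappa v x)))"
    and vr: "v \<noteq> r"
  shows "valid_fm E r x \<Longrightarrow> (\<forall>P\<in>set Ps. P 0 = v \<and> is_path E P) \<Longrightarrow>
        (\<forall>Qs. subseq Qs Ps \<longrightarrow> f (sigma_seq Qs x) \<noteq> \<infinity>) \<Longrightarrow>
        Delta Ps (\<lambda>y. enn2real (f y)) x =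
          (case Ps of [] \<Rightarrow> enn2real (f x) | [P] \<Rightarrow> enn2real (f (sigma P (kappa v x))) | _ \<Rightarrow> 0)"
proof (induction Ps arbitrary: x)
  case Nil
  then show ?case by simp
next
  case (Cons P Ps)
  have P: "P 0 = v" "is_path E P" using Cons.prems(2) by auto
  have vs: "valid_fm E r (sigma P x)" using valid_sigma[OF Cons.prems(1) P vr] .
  have fin: "\<forall>Qs. subseq Qs Ps \<longrightarrow> f (sigma_seq Qs (sigma P x)) \<noteq> \<infinity>"
  proof (intro allI impI)
    fix Qs assume "subseq Qs Ps"
    hence "subseq (P # Qs) (P # Ps)" by simp
    hence "f (sigma_seq (P # Qs) x) \<noteq> \<infinity>" using Cons.prems(3) by blast
    thus "f (sigma_seq Qs (sigma P x)) \<noteq> \<infinity>" by (simp add: sigma_seq_def)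
  qed
  have fin2: "\<forall>Qs. subseq Qs Ps \<longrightarrow> f (sigma_seq Qs x) \<noteq> \<infinity>"
    using Cons.prems(3) by (meson list_emb_Cons)
  have IH1: "Delta Ps (\<lambda>y. enn2real (f y)) (sigma P x) =
          (case Ps of [] \<Rightarrow> enn2real (f (sigma P x)) | [Q] \<Rightarrow> enn2real (f (sigma Q (kappa v x))) | _ \<Rightarrow> 0)"
    using Cons.IH[OF vs _ fin] Cons.prems(2) kappa_sigma[of P v] by (auto split: list.splits)
  have IH2: "Delta Ps (\<lambda>y. enn2real (f y)) x =
          (case Ps of [] \<Rightarrow> enn2real (f x) | [Q] \<Rightarrow> enn2real (f (sigma Q (kappa v x))) | _ \<Rightarrow> 0)"
    using Cons.IH[OF Cons.prems(1) _ fin2] Cons.prems(2) by auto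
  show ?case
  proof (cases Ps)
    case Nil
    have a: "f x \<noteq> \<infinity>" using Cons.prems(3)[rule_format, of "[]"] by (simp add: sigma_seq_def)
    have b: "f (sigma P x) \<noteq> \<infinity>" using Cons.prems(3)[rule_format, of "[P]"] Nil by (simp add: sigma_seq_def)
    have e: "f (sigma P x) = f x + f (sigma P (kappa v x))" using add_frog[OF rec Cons.prems(1) P vr] .
    hence c: "f (sigma P (kappa v x)) \<noteq> \<infinity>" using b by auto
    show ?thesis using IH1 IH2 Nil e a c by (simp add: enn2real_plus top.not_eq_extremum)
  next
    case (Cons Q Qs)
    then show ?thesis using IH1 IH2 by (cases Qs) auto
  qed
qed

theorem lemma19:
  fixes E :: "'v::countable \<Rightarrow> 'v \<Rightarrow> bool" and r v :: 'v
    and f :: "'v frogs \<Rightarrow> ennreal"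
  assumes symE: "\<forall>a b. E a b \<longleftrightarrow> E b a"
    and vr: "v \<noteq> r"
    and rec: "\<forall>x. valid_fm E r x \<longrightarrow>
                 f x = (\<Sum>i = 1..fst x v. f (sigma (snd x v i) (kappa v x)))"
  shows
    "(\<forall>x Ps. valid_fm E r x \<and> Ps \<noteq> [] \<and>
        (\<forall>P\<in>set Ps. P 0 = v \<and> is_path E P) \<and>
        (\<forall>Qs. subseq Qs Ps \<longrightarrow> f (sigma_seq Qs x) \<noteq> \<infinity>)
      \<longrightarrow> (-1) ^ length Ps * Delta Ps (\<lambda>y. enn2real (f y)) x \<le> 0)
   \<and> (\<forall>x P. valid_fm E r x \<and> P 0 = v \<and> is_path E P \<and> f x = \<infinity>
      \<longrightarrow> f (sigma P x) = \<infinity>)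
   \<and> (\<forall>x P1 P2. valid_fm E r x \<and> P1 0 = v \<and> is_path E P1 \<and> P2 0 = v \<and> is_path E P2
        \<and> f (sigma P1 (sigma P2 x)) = \<infinity>
      \<longrightarrow> f (sigma P1 x) = \<infinity> \<or> f (sigma P2 x) = \<infinity>)"
proof (intro conjI allI impI)
  fix x Ps
  assume h: "valid_fm E r x \<and> Ps \<noteq> [] \<and>
        (\<forall>P\<in>set Ps. P 0 = v \<and> is_path E P) \<and>
        (\<forall>Qs. subseq Qs Ps \<longrightarrow> f (sigma_seq Qs x) \<noteq> \<infinity>)"
  hence D: "Delta Ps (\<lambda>y. enn2real (f y)) x =
          (case Ps of [] \<Rightarrow> enn2real (f x) | [P] \<Rightarrow> enn2real (f (sigma P (kappa v x))) | _ \<Rightarrow> 0)"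
    using delta_claim[OF rec vr] by blast
  show "(-1) ^ length Ps * Delta Ps (\<lambda>y. enn2real (f y)) x \<le> 0"
  proof (cases Ps)
    case Nil then show ?thesis using h by simp
  next
    case (Cons Q Qs)
    then show ?thesis using D by (cases Qs) auto
  qed
next
  fix x P
  assume h: "valid_fm E r x \<and> P 0 = v \<and> is_path E P \<and> f x = \<infinity>"
  thus "f (sigma P x) = \<infinity>" using add_frog[OF rec _ _ _ vr, of x P] by simp
next
  fix x P1 P2
  assume h: "valid_fm E r x \<and> P1 0 = v \<and> is_path E P1 \<and> P2 0 = v \<and> is_path E P2
        \<and> f (sigma P1 (sigma P2 x)) = \<infinity>"
  have v2: "valid_fm E r (sigma P2 x)" using valid_sigma[of E r x P2 v] h vr by blast
  have "f (sigma P1 (sigma P2 x)) = f (sigma P2 x) + f (sigma P1 (kappa v x))"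
    using add_frog[OF rec v2 _ _ vr, of P1] h kappa_sigma[of P2 v x] by simp
  also have "\<dots> = f x + f (sigma P2 (kappa v x)) + f (sigma P1 (kappa v x))"
    using add_frog[OF rec _ _ _ vr, of x P2] h by simp
  finally have "f x + f (sigma P2 (kappa v x)) + f (sigma P1 (kappa v x)) = \<infinity>" using h by simp
  hence "f x = \<infinity> \<or> f (sigma P2 (kappa v x)) = \<infinity> \<or> f (sigma P1 (kappa v x)) = \<infinity>"
    by (simp add: ennreal_add_eq_top)
  moreover have "f (sigma P1 x) = f x + f (sigma P1 (kappa v x))"
    using add_frog[OF rec _ _ _ vr, of x P1] h by simp
  moreover have "f (sigma P2 x) = f x + f (sigma P2 (kappa v x))"
    using add_frog[OF rec _ _ _ vr, of x P2] h by simp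
  ultimately show "f (sigma P1 x) = \<infinity> \<or> f (sigma P2 x) = \<infinity>" by auto
qed

end
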